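(* Let $S\subset\mathbb{R}^n$ be an $r$-dimensional subspace, let $U$ be an $n\times r$ matrix whose columns form an orthonormal basis of $S$, let $y\in S^\perp$ be nonzero, let $\Omega=(\Omega(1),\dots,\Omega(m))$ be $m$ indices drawn independently and uniformly at random from $\{1,\dots,n\}$ (with replacement), let $\delta>0$ and $\beta=\sqrt{2\mu(y)\log(\frac1\delta)}$. Then with probability at least $1-\delta$, $$\|U_\Omega^Ty_\Omega\|_2^2\ \le\ (1+\beta)^2\,\frac{m}{n}\,\frac{r\mu(S)}{n}\,\|y\|_2^2 .$$
   Context: For a sample sequence $\Omega=(\Omega(1),\dots,\Omega(m))$ of indices in $\{1,\dots,n\}$, $y_\Omega\in\mathbb{R}^m$ is the vector with entries $y_{\Omega(i)}$, and $U_\Omega$ is the $m\times r$ matrix whose $i$-th row is the $\Omega(i)$-th row of $U$. $P_S$ is the orthogonal projection onto $S$; the coherence of $S$ is $\mu(S):=\frac{n}{r}\max_j\|P_Se_j\|_2^2$ with $e_j$ the standard basis vectors. For a nonzero vector $z\in\mathbb{R}^n$, $\mu(z)=\frac{n\|z\|_\infty^2}{\|z\|_2^2}$. *)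

theory Defs
  imports "HOL-Analysis.Analysis" "HOL-Probability.Probability"
begin

definition orth_proj :: "(real^'n) set \<Rightarrow> real^'n \<Rightarrow> real^'n" where
  "orth_proj S x = (THE p. p \<in> S \<and> (\<forall>s\<in>S. orthogonal (x - p) s))"

definition coherence :: "(real^'n) set \<Rightarrow> real" where
  "coherence S = (real CARD('n) / real (dim S)) *
     Max ((\<lambda>j::'n. (norm (orth_proj S (axis j 1)))\<^sup>2) ` UNIV)"

definition vec_coherence :: "real^'n \<Rightarrow> real" where
  "vec_coherence z = real CARD('n) * (Max ((\<lambda>j. \<bar>z $ j\<bar>) ` UNIV))\<^sup>2 / (norm z)\<^sup>2"

text \<open>U_Omega^T y_Omega for a sample sequence Omega(0..m-1) of row indices.\<close>
definition sampled_proj :: "real^'r^'n \<Rightarrow> real^'n \<Rightarrow> nat \<Rightarrow> (nat \<Rightarrow> 'n) \<Rightarrow> real^'r" where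
  "sampled_proj U y m \<Omega> = (\<chi> k. \<Sum>i<m. U $ (\<Omega> i) $ k * y $ (\<Omega> i))"

definition sample_pmf :: "nat \<Rightarrow> (nat \<Rightarrow> 'n::finite) pmf" where
  "sample_pmf m = pmf_of_set (PiE {..<m} (\<lambda>_. UNIV))"

end

theory Submission
  imports Defs
begin

lemma hoeff_fin:
  fixes h :: "'n::finite \<Rightarrow> real"
  assumes "\<And>j. h j \<in> {a..b}" "l > 0"
  shows "(\<Sum>j\<in>UNIV. exp (l * (h j - (\<Sum>i\<in>UNIV. h i) / real CARD('n)))) / real CARD('n)
     \<le> exp (l\<^sup>2 * (b - a)\<^sup>2 / 8)"
proof -
  let ?p = "pmf_of_set (UNIV :: 'n set)"
  interpret interval_bounded_random_variable "measure_pmf ?p" h a b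
    by unfold_locales (use assms in auto)
  have E: "measure_pmf.expectation ?p h = (\<Sum>i\<in>UNIV. h i) / real CARD('n)"
    by (subst integral_pmf_of_set) auto
  have "nn_integral (measure_pmf ?p) (\<lambda>x. exp (l * (h x - measure_pmf.expectation ?p h))) \<le> ennreal (exp (l\<^sup>2 * (b - a)\<^sup>2 / 8))"
    by (rule Hoeffdings_lemma_nn_integral) (use assms in auto)
  moreover have "nn_integral (measure_pmf ?p) (\<lambda>x. exp (l * (h x - measure_pmf.expectation ?p h)))
     = ennreal ((\<Sum>j\<in>UNIV. exp (l * (h j - measure_pmf.expectation ?p h))) / real CARD('n))"
    apply (subst nn_integral_pmf_of_set)
    apply (auto simp: sum_ennreal ennreal_of_nat_eq_real_of_nat)
    apply (subst divide_ennreal) by (auto intro: sum_nonneg)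
  ultimately show ?thesis unfolding E by (simp add: ennreal_le_iff)
qed

definition PS :: "nat \<Rightarrow> (nat \<Rightarrow> 'n::finite) set" where
  "PS m = PiE {..<m} (\<lambda>_. UNIV)"

definition avg :: "nat \<Rightarrow> ((nat \<Rightarrow> 'n::finite) \<Rightarrow> real) \<Rightarrow> real" where
  "avg m f = (\<Sum>w\<in>PS m. f w) / real CARD('n)^m"

lemma PS_fin[simp]: "finite (PS m)" unfolding PS_def by (auto intro: finite_PiE)
lemma PS_ne[simp]: "PS m \<noteq> {}" unfolding PS_def by (auto simp: PiE_eq_empty_iff)
lemma card_PS: "card (PS m :: (nat \<Rightarrow> 'n::finite) set) = CARD('n)^m"
  unfolding PS_def by (simp add: card_PiE)

lemma PS_upd: "w \<in> PS m \<Longrightarrow> i < m \<Longrightarrow> w(i:=j) \<in> PS m"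
  unfolding PS_def by (auto simp: PiE_def extensional_def)

lemma PS_Suc_upd: "w \<in> PS m \<Longrightarrow> w(m:=j) \<in> PS (Suc m)"
  unfolding PS_def by (auto simp: PiE_def extensional_def)

lemma sum_PS_Suc:
  "(\<Sum>w\<in>PS (Suc m). F w) = (\<Sum>w\<in>PS m. \<Sum>j\<in>(UNIV::'n::finite set). F (w(m:=j)))"
proof -
  have eq: "PS (Suc m) = (\<lambda>(y, g). g(m := y)) ` ((UNIV::'n set) \<times> PS m)"
    unfolding PS_def lessThan_Suc by (rule PiE_insert_eq)
  have inj: "inj_on (\<lambda>(y, g). g(m := y)) ((UNIV::'n set) \<times> PS m)"
    unfolding PS_def by (rule inj_combinator) auto
  have "(\<Sum>w\<in>PS (Suc m). F w) = (\<Sum>x\<in>(UNIV::'n set) \<times> PS m. F ((\<lambda>(y, g). g(m := y)) x))"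
    unfolding eq by (subst sum.reindex[OF inj]) simp
  also have "\<dots> = (\<Sum>j\<in>(UNIV::'n set). \<Sum>w\<in>PS m. F (w(m:=j)))"
    by (subst sum.cartesian_product) (simp add: case_prod_unfold)
  also have "\<dots> = (\<Sum>w\<in>PS m. \<Sum>j\<in>(UNIV::'n set). F (w(m:=j)))"
    by (rule sum.swap)
  finally show ?thesis .
qed

lemma avg_Suc:
  "avg (Suc m) (f :: (nat \<Rightarrow> 'n::finite) \<Rightarrow> real) = avg m (\<lambda>w. (\<Sum>j\<in>UNIV. f (w(m:=j))) / real CARD('n))"
  unfolding avg_def sum_PS_Suc by (simp add: sum_divide_distrib[symmetric] field_simps)

lemma mgf:
  fixes f :: "(nat \<Rightarrow> 'n::finite) \<Rightarrow> real"
  assumes "\<And>w i j. w \<in> PS m \<Longrightarrow> i < m \<Longrightarrow> \<bar>f w - f (w(i:=j))\<bar> \<le> c" and "l > 0"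
  shows "(\<Sum>w\<in>PS m. exp (l * (f w - avg m f))) / real CARD('n)^m \<le> exp (l\<^sup>2 * real m * c\<^sup>2 / 8)"
  using assms(1)
proof (induction m arbitrary: f)
  case 0
  then show ?case by (simp add: PS_def avg_def)
next
  case (Suc m)
  define N where "N = real CARD('n)"
  have N0: "N > 0" unfolding N_def by simp
  define g where "g = (\<lambda>w. (\<Sum>j\<in>UNIV. f (w(m:=j))) / N)"
  have gb: "\<bar>g w - g (w(i:=j'))\<bar> \<le> c" if "w \<in> PS m" "i < m" for w i j'
  proof -
    have "abs ((\<Sum>j\<in>UNIV. f (w(m:=j))) - (\<Sum>j\<in>UNIV. f (w(i:=j', m:=j))))
        = abs (\<Sum>j\<in>UNIV. f (w(m:=j)) - f (w(m:=j, i:=j')))"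
      using that by (simp add: sum_subtractf fun_upd_twist)
    also have "\<dots> \<le> (\<Sum>j\<in>(UNIV::'n set). c)"
      by (rule order_trans[OF sum_abs sum_mono]) (use that in \<open>auto intro!: Suc.prems PS_Suc_upd\<close>)
    also have "\<dots> = N * c" by (simp add: N_def)
    finally show ?thesis using N0 by (simp add: g_def diff_divide_distrib[symmetric] abs_divide field_simps)
  qed
  have IH: "(\<Sum>w\<in>PS m. exp (l * (g w - avg m g))) / N^m \<le> exp (l\<^sup>2 * real m * c\<^sup>2 / 8)"
    using Suc.IH[of g] gb unfolding N_def by blast
  have A: "avg (Suc m) f = avg m g" unfolding avg_Suc g_def N_def ..
  have H: "(\<Sum>j\<in>UNIV. exp (l * (f (w(m:=j)) - g w))) / N \<le> exp (l\<^sup>2 * c\<^sup>2 / 8)"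
    if "w \<in> PS m" for w
  proof -
    define h where "h = (\<lambda>j. f (w(m:=j)))"
    define a where "a = Min (range h)"
    have hd: "\<bar>h j - h j'\<bar> \<le> c" for j j'
      using Suc.prems[of "w(m:=j)" m j'] PS_Suc_upd[OF that] by (simp add: h_def del: fun_upd_apply)
    have "a \<in> range h" unfolding a_def by (rule Min_in) auto
    then obtain j0 where j0: "a = h j0" by auto
    have "h j \<in> {a..a + c}" for j
      using hd[of j j0] j0 Min_le[of "range h" "h j"] by (auto simp: a_def)
    from hoeff_fin[OF this \<open>l > 0\<close>]
    show ?thesis by (simp add: h_def g_def N_def)
  qed
  have "(\<Sum>w\<in>PS (Suc m). exp (l * (f w - avg (Suc m) f)))
      = (\<Sum>w\<in>PS m. exp (l * (g w - avg m g)) * (\<Sum>j\<in>UNIV. exp (l * (f (w(m:=j)) - g w))))"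
    unfolding sum_PS_Suc A sum_distrib_left
    by (intro sum.cong refl) (simp add: exp_add[symmetric] algebra_simps)
  also have "\<dots> \<le> (\<Sum>w\<in>PS m. exp (l * (g w - avg m g)) * (N * exp (l\<^sup>2 * c\<^sup>2 / 8)))"
    using H N0 by (intro sum_mono mult_left_mono) (auto simp: field_simps)
  also have "\<dots> = ((\<Sum>w\<in>PS m. exp (l * (g w - avg m g))) / N^m) * (N^Suc m * exp (l\<^sup>2 * c\<^sup>2 / 8))"
    using N0 by (simp add: sum_distrib_right sum_distrib_left[symmetric] field_simps)
  also have "\<dots> \<le> exp (l\<^sup>2 * real m * c\<^sup>2 / 8) * (N^Suc m * exp (l\<^sup>2 * c\<^sup>2 / 8))"
    using IH N0 by (intro mult_right_mono) auto
  finally have "(\<Sum>w\<in>PS (Suc m). exp (l * (f w - avg (Suc m) f))) / N^Suc m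
      \<le> exp (l\<^sup>2 * real m * c\<^sup>2 / 8) * exp (l\<^sup>2 * c\<^sup>2 / 8)"
    using N0 by (simp add: field_simps)
  also have "\<dots> = exp (l\<^sup>2 * real (Suc m) * c\<^sup>2 / 8)"
    by (simp add: mult_exp_exp[symmetric] algebra_simps add_divide_distrib)
  finally show ?case unfolding N_def .
qed


lemma chernoff:
  fixes f :: "(nat \<Rightarrow> 'n::finite) \<Rightarrow> real"
  assumes "\<And>w i j. w \<in> PS m \<Longrightarrow> i < m \<Longrightarrow> \<bar>f w - f (w(i:=j))\<bar> \<le> c" and "l > 0"
  shows "measure_pmf.prob (pmf_of_set (PS m)) {w. f w > avg m f + t}
     \<le> exp (l\<^sup>2 * real m * c\<^sup>2 / 8 - l * t)"
proof -
  define A where "A = avg m f"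
  have "measure_pmf.prob (pmf_of_set (PS m)) {w. f w > A + t}
      = real (card (PS m \<inter> {w. f w > A + t})) / real (card (PS m :: (nat \<Rightarrow> 'n) set))"
    using measure_pmf_of_set[of "PS m" "{w. f w > A + t}"] by simp
  also have "real (card (PS m \<inter> {w. f w > A + t})) = (\<Sum>w\<in>PS m. if f w > A + t then 1 else 0)"
  proof -
    have "PS m \<inter> {w. f w > A + t} = {w\<in>PS m. f w > A + t}" by auto
    thus ?thesis by (simp add: sum.inter_filter[symmetric])
  qed
  also have "\<dots> \<le> (\<Sum>w\<in>PS m. exp (l * (f w - A)) * exp (- (l * t)))"
  proof (intro sum_mono)
    fix w
    show "(if f w > A + t then 1 else 0) \<le> exp (l * (f w - A)) * exp (- (l * t))"
    proof (cases "f w > A + t")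
      case True
      then have "l * (f w - A) - l * t \<ge> 0" using \<open>l > 0\<close>
        by (simp add: right_diff_distrib[symmetric])
      then have "1 \<le> exp (l * (f w - A) - l * t)" by simp
      also have "exp (l * (f w - A) - l * t) = exp (l * (f w - A)) * exp (- (l * t))"
        by (simp add: exp_add[symmetric])
      finally show ?thesis using True by simp
    qed auto
  qed
  also have "\<dots> = (\<Sum>w\<in>PS m. exp (l * (f w - A))) * exp (- (l * t))"
    by (simp add: sum_distrib_right)
  finally have "measure_pmf.prob (pmf_of_set (PS m)) {w. f w > A + t}
     \<le> (\<Sum>w\<in>PS m. exp (l * (f w - A))) * exp (- (l * t)) / real (card (PS m :: (nat \<Rightarrow> 'n) set))"
    by (simp add: divide_right_mono)
  also have "\<dots> = ((\<Sum>w\<in>PS m. exp (l * (f w - A))) / real CARD('n)^m) * exp (- (l * t))"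
    by (simp add: card_PS)
  also have "\<dots> \<le> exp (l\<^sup>2 * real m * c\<^sup>2 / 8) * exp (- (l * t))"
    using mgf[OF assms] unfolding A_def by (intro mult_right_mono) auto
  also have "\<dots> = exp (l\<^sup>2 * real m * c\<^sup>2 / 8 - l * t)" by (simp add: exp_add[symmetric])
  finally show ?thesis unfolding A_def .
qed


lemma avg_add_const: "avg m (\<lambda>w. f w + k) = avg m f + k"
proof -
  have "avg m (\<lambda>w. f w + k) = avg m f + real (card (PS m :: (nat \<Rightarrow> 'a::finite) set)) * k / real CARD('a)^m"
    unfolding avg_def by (simp add: sum.distrib add_divide_distrib)
  thus ?thesis by (simp add: card_PS)
qed

lemma avg_sq:
  fixes Z :: "'n::finite \<Rightarrow> 'v::real_inner"
  assumes "sum Z UNIV = 0"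
  shows "avg m (\<lambda>w. (norm (\<Sum>i<m. Z (w i)))\<^sup>2) = real m * (\<Sum>j\<in>UNIV. (norm (Z j))\<^sup>2) / real CARD('n)"
proof (induction m)
  case 0
  then show ?case by (simp add: avg_def PS_def)
next
  case (Suc m)
  define N where "N = real CARD('n)"
  define T where "T = (\<Sum>j\<in>UNIV. (norm (Z j))\<^sup>2)"
  have N0: "N > 0" unfolding N_def by simp
  have "(\<Sum>j\<in>UNIV. (norm (\<Sum>i<Suc m. Z ((w(m:=j)) i)))\<^sup>2) / N = (norm (\<Sum>i<m. Z (w i)))\<^sup>2 + T / N"
    for w :: "nat \<Rightarrow> 'n"
  proof -
    define V where "V = (\<Sum>i<m. Z (w i))"
    have s: "(\<Sum>i<Suc m. Z ((w(m:=j)) i)) = V + Z j" for j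
      unfolding V_def by (simp add: add.commute)
    have "(\<Sum>j\<in>UNIV. (norm (V + Z j))\<^sup>2) = (\<Sum>j\<in>UNIV. (norm V)\<^sup>2 + 2 * inner V (Z j) + (norm (Z j))\<^sup>2)"
      by (intro sum.cong refl) (simp add: power2_norm_eq_inner inner_add inner_commute)
    also have "\<dots> = N * (norm V)\<^sup>2 + 2 * inner V (sum Z UNIV) + T"
      by (simp add: sum.distrib inner_sum_right sum_distrib_left[symmetric] N_def T_def)
    also have "\<dots> = N * (norm V)\<^sup>2 + T" using assms by simp
    finally show ?thesis unfolding s using N0 by (simp add: V_def field_simps)
  qed
  then have "avg (Suc m) (\<lambda>w. (norm (\<Sum>i<Suc m. Z (w i)))\<^sup>2) = avg m (\<lambda>w. (norm (\<Sum>i<m. Z (w i)))\<^sup>2 + T / N)"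
    unfolding avg_Suc N_def by simp
  also have "\<dots> = real m * T / N + T / N" unfolding avg_add_const Suc.IH T_def N_def ..
  finally show ?case unfolding T_def N_def by (simp add: field_simps)
qed

lemma avg_le_sqrt: "avg m f \<le> sqrt (avg m (\<lambda>w. (f w)\<^sup>2))"
proof -
  define a where "a = avg m f"
  define K where "K = real (card (PS m :: (nat \<Rightarrow> 'a::finite) set))"
  have K: "K = real CARD('a)^m" unfolding K_def card_PS by simp
  have K0: "K > 0" unfolding K by simp
  have sf: "(\<Sum>w\<in>PS m. f w) = K * a" unfolding a_def avg_def K using K0 K by simp
  have "0 \<le> (\<Sum>w\<in>PS m. (f w - a)\<^sup>2)" by (rule sum_nonneg) auto
  also have "\<dots> = (\<Sum>w\<in>PS m. (f w)\<^sup>2) - 2 * a * (\<Sum>w\<in>PS m. f w) + K * a\<^sup>2"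
    by (simp add: power2_diff sum.distrib sum_subtractf sum_distrib_left K_def mult_ac)
  finally have "K * a\<^sup>2 \<le> (\<Sum>w\<in>PS m. (f w)\<^sup>2)" unfolding sf by (simp add: power2_eq_square algebra_simps)
  then have "a\<^sup>2 \<le> avg m (\<lambda>w. (f w)\<^sup>2)" unfolding avg_def K[symmetric] using K0
    by (simp add: field_simps)
  then have "sqrt (a\<^sup>2) \<le> sqrt (avg m (\<lambda>w. (f w)\<^sup>2))" by (rule real_sqrt_le_mono)
  thus ?thesis unfolding a_def by simp
qed

lemma sum_upd_diff:
  fixes Z :: "'n \<Rightarrow> 'v::real_normed_vector" and w :: "nat \<Rightarrow> 'n"
  assumes "i < m"
  shows "(\<Sum>i'<m. Z ((w(i:=j)) i')) = (\<Sum>i'<m. Z (w i')) - Z (w i) + Z j"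
proof -
  have "(\<Sum>i'<m. Z ((w(i:=j)) i')) = Z j + (\<Sum>i'\<in>{..<m}-{i}. Z ((w(i:=j)) i'))"
    using assms by (subst sum.remove[of _ i]) auto
  also have "(\<Sum>i'\<in>{..<m}-{i}. Z ((w(i:=j)) i')) = (\<Sum>i'\<in>{..<m}-{i}. Z (w i'))"
    by (intro sum.cong) auto
  also have "\<dots> = (\<Sum>i'<m. Z (w i')) - Z (w i)"
    using assms by (subst sum.remove[of _ i]) auto
  finally show ?thesis by (simp add: algebra_simps)
qed

lemma main_abs:
  fixes Z :: "'n::finite \<Rightarrow> 'v::real_inner"
  assumes Z0: "sum Z UNIV = 0" and Zb: "\<And>j. norm (Z j) \<le> b" and "b > 0" "m > 0" "t > 0"
    and B: "B \<ge> real m * (\<Sum>j\<in>UNIV. (norm (Z j))\<^sup>2) / real CARD('n)"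
  shows "measure_pmf.prob (pmf_of_set (PS m)) {w. norm (\<Sum>i<m. Z (w i)) \<le> sqrt B + t}
     \<ge> 1 - exp (- (2 * t\<^sup>2 / (real m * (2 * b)\<^sup>2)))"
proof -
  define X where "X = (\<lambda>w. norm (\<Sum>i<m. Z (w i)))"
  define c where "c = 2 * b"
  define l where "l = 4 * t / (real m * c\<^sup>2)"
  have c0: "c > 0" using \<open>b > 0\<close> unfolding c_def by simp
  have l0: "l > 0" unfolding l_def using c0 \<open>m > 0\<close> \<open>t > 0\<close> by simp
  have bd: "\<bar>X w - X (w(i:=j))\<bar> \<le> c" if "i < m" for w i j
  proof -
    have "\<bar>X w - X (w(i:=j))\<bar> \<le> norm ((\<Sum>i<m. Z (w i)) - (\<Sum>i'<m. Z ((w(i:=j)) i')))"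
      unfolding X_def by (rule norm_triangle_ineq3)
    also have "\<dots> = norm (Z (w i) - Z j)" unfolding sum_upd_diff[OF that] by (simp add: algebra_simps)
    also have "\<dots> \<le> norm (Z (w i)) + norm (Z j)" by (rule norm_triangle_ineq4)
    also have "\<dots> \<le> c" using Zb[of "w i"] Zb[of j] unfolding c_def by simp
    finally show ?thesis .
  qed
  have EX: "avg m X \<le> sqrt B"
  proof -
    have "avg m X \<le> sqrt (avg m (\<lambda>w. (X w)\<^sup>2))" by (rule avg_le_sqrt)
    also have "avg m (\<lambda>w. (X w)\<^sup>2) = real m * (\<Sum>j\<in>UNIV. (norm (Z j))\<^sup>2) / real CARD('n)"
      unfolding X_def by (rule avg_sq[OF Z0])
    finally show ?thesis using B real_sqrt_le_mono order_trans by blast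
  qed
  have ch: "measure_pmf.prob (pmf_of_set (PS m)) {w. X w > avg m X + t}
     \<le> exp (l\<^sup>2 * real m * c\<^sup>2 / 8 - l * t)"
    by (rule chernoff[OF bd l0])
  have "l\<^sup>2 * real m * c\<^sup>2 / 8 - l * t = - (2 * t\<^sup>2 / (real m * c\<^sup>2))"
    unfolding l_def using c0 \<open>m > 0\<close> by (simp add: field_simps power2_eq_square)
  note ch = ch[unfolded this]
  have sub: "UNIV - {w. X w \<le> sqrt B + t} \<subseteq> {w. X w > avg m X + t}" using EX by auto
  have "measure_pmf.prob (pmf_of_set (PS m)) (UNIV - {w. X w \<le> sqrt B + t})
      \<le> measure_pmf.prob (pmf_of_set (PS m)) {w. X w > avg m X + t}"
    by (rule measure_pmf.finite_measure_mono[OF sub]) simp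
  moreover have "measure_pmf.prob (pmf_of_set (PS m)) (UNIV - {w. X w \<le> sqrt B + t})
      = 1 - measure_pmf.prob (pmf_of_set (PS m)) {w. X w \<le> sqrt B + t}"
    using measure_pmf.prob_compl[of "{w. X w \<le> sqrt B + t}" "pmf_of_set (PS m)"] by simp
  ultimately show ?thesis using ch unfolding X_def c_def by linarith
qed



lemma proj_props:
  fixes U :: "real^'r^'n"
  assumes orth: "transpose U ** U = mat 1"
  defines "Q \<equiv> (\<lambda>x. \<Sum>k\<in>UNIV. inner (column k U) x *\<^sub>R column k U)"
  shows "orth_proj (span (columns U)) x = Q x"
proof -
  let ?S = "span (columns U)"
  have cc: "inner (column i U) (column j U) = (if i = j then 1 else 0)" for i j
  proof -
    have "(transpose U ** U) $ i $ j = inner (column i U) (column j U)"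
      by (simp add: matrix_matrix_mult_def transpose_def column_def inner_vec_def)
    thus ?thesis using orth by (simp add: mat_def)
  qed
  have colS: "column k U \<in> ?S" for k
    by (rule span_base) (auto simp: columns_def)
  have QS: "Q x \<in> ?S"
    unfolding Q_def by (intro span_sum span_scale colS)
  have Qo: "orthogonal (x - Q x) s" if "s \<in> ?S" for s
  proof -
    have "orthogonal (x - Q x) a" if "a \<in> columns U" for a
    proof -
      obtain k where a: "a = column k U" using \<open>a \<in> columns U\<close> by (auto simp: columns_def)
      have md: "\<And>c::real. \<And>P. c * (if P then 1 else 0) = (if P then c else 0)" by simp
      have "inner (Q x) a = (\<Sum>k'\<in>UNIV. inner (column k' U) x * (if k' = k then 1 else 0))"
        unfolding Q_def a by (simp add: inner_sum_left cc)
      also have "\<dots> = inner (column k U) x" unfolding md by (simp add: sum.delta')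
      finally have eq: "inner (Q x) a = inner (column k U) x" .
      have "inner x a = inner (column k U) x" unfolding a by (rule inner_commute)
      then show ?thesis unfolding orthogonal_def inner_diff_left eq by (simp only: right_minus_eq)
    qed
    thus ?thesis using orthogonal_to_span[OF that] by blast
  qed
  have uniq: "p = Q x" if "p \<in> ?S" "\<forall>s\<in>?S. orthogonal (x - p) s" for p
  proof -
    have d: "p - Q x \<in> ?S" using that(1) QS by (simp add: span_diff)
    have "orthogonal (x - p) (p - Q x)" "orthogonal (x - Q x) (p - Q x)" using that(2) Qo d by auto
    then have o: "inner (x - Q x) (p - Q x) = 0" "inner (x - p) (p - Q x) = 0"
      unfolding orthogonal_def by auto
    have e: "(x - Q x) - (x - p) = p - Q x" by simp
    have "inner ((x - Q x) - (x - p)) (p - Q x) = inner (x - Q x) (p - Q x) - inner (x - p) (p - Q x)"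
      by (rule inner_diff_left)
    then have "inner (p - Q x) (p - Q x) = inner (x - Q x) (p - Q x) - inner (x - p) (p - Q x)"
      unfolding e .
    then have "inner (p - Q x) (p - Q x) = 0" using o by simp
    thus ?thesis by simp
  qed
  show ?thesis unfolding orth_proj_def
  proof (rule the_equality)
    show "Q x \<in> ?S \<and> (\<forall>s\<in>?S. orthogonal (x - Q x) s)" using QS Qo by blast
    fix p assume "p \<in> ?S \<and> (\<forall>s\<in>?S. orthogonal (x - p) s)"
    then show "p = Q x" using uniq by blast
  qed
qed

lemma proj_norm:
  fixes U :: "real^'r^'n"
  assumes orth: "transpose U ** U = mat 1"
  shows "(norm (orth_proj (span (columns U)) (axis j 1)))\<^sup>2 = (\<Sum>k\<in>UNIV. (U $ j $ k)\<^sup>2)"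
proof -
  have cc: "inner (column i U) (column j U) = (if i = j then 1 else 0)" for i j
  proof -
    have "(transpose U ** U) $ i $ j = inner (column i U) (column j U)"
      by (simp add: matrix_matrix_mult_def transpose_def column_def inner_vec_def)
    thus ?thesis using orth by (simp add: mat_def)
  qed
  define a where "a = (\<lambda>k. inner (column k U) (axis j 1))"
  have a: "a k = U $ j $ k" for k by (simp add: a_def inner_axis column_def)
  have "(norm (orth_proj (span (columns U)) (axis j 1)))\<^sup>2
      = inner (\<Sum>k\<in>UNIV. a k *\<^sub>R column k U) (\<Sum>k\<in>UNIV. a k *\<^sub>R column k U)"
    unfolding proj_props[OF orth] a_def by (simp add: power2_norm_eq_inner)
  also have "\<dots> = (\<Sum>k\<in>UNIV. \<Sum>k'\<in>UNIV. a k * a k' * (if k' = k then 1 else 0))"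
    by (simp add: inner_sum_left inner_sum_right cc mult.assoc sum_distrib_left)
  also have "\<dots> = (\<Sum>k\<in>UNIV. (a k)\<^sup>2)"
  proof -
    have md: "\<And>c::real. \<And>P. c * (if P then 1 else 0) = (if P then c else 0)" by simp
    show ?thesis unfolding md by (simp add: sum.delta power2_eq_square)
  qed
  finally show ?thesis by (simp add: a)
qed


theorem lemma2:
  fixes S :: "(real^'n) set" and U :: "real^'r^'n" and y :: "real^'n"
    and m :: nat and \<delta> :: real
  assumes "subspace S" and "dim S = CARD('r)"
    and "transpose U ** U = mat 1"
    and "span (columns U) = S"
    and "y \<in> orthogonal_comp S" and "y \<noteq> 0"
    and "\<delta> > 0"
  shows "measure_pmf.prob (sample_pmf m)
      {\<Omega>. (norm (sampled_proj U y m \<Omega>))\<^sup>2 \<le>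
          (1 + sqrt (2 * vec_coherence y * ln (1 / \<delta>)))\<^sup>2 * (real m / real CARD('n))
          * (real CARD('r) * coherence S / real CARD('n)) * (norm y)\<^sup>2}
    \<ge> 1 - \<delta>"
proof -
  note orth = assms(3)
  define N where "N = real CARD('n)"
  define r where "r = real CARD('r)"
  define Mx where "Mx = Max ((\<lambda>j::'n. (norm (orth_proj S (axis j 1)))\<^sup>2) ` UNIV)"
  define M where "M = Max ((\<lambda>j. \<bar>y $ j\<bar>) ` UNIV)"
  define ny where "ny = (norm y)\<^sup>2"
  define \<beta> where "\<beta> = sqrt (2 * vec_coherence y * ln (1 / \<delta>))"
  define Z where "Z = (\<lambda>j. (\<chi> k. U $ j $ k * y $ j) :: real^'r)"
  define E where "E = {\<Omega>. (norm (sampled_proj U y m \<Omega>))\<^sup>2 \<le>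
          (1 + \<beta>)\<^sup>2 * (real m / N) * (r * coherence S / N) * ny}"
  have N0: "N > 0" unfolding N_def by simp
  have r0: "r > 0" unfolding r_def by simp
  have rowsq: "(\<Sum>k\<in>UNIV. (U $ j $ k)\<^sup>2) \<le> Mx" for j
    unfolding Mx_def proj_norm[OF orth, of j, symmetric] assms(4) by (rule Max_ge) auto
  have Mx0: "Mx \<ge> 0"
  proof -
    have "0 \<le> (\<Sum>k\<in>UNIV. (U $ undefined $ k)\<^sup>2)" by (rule sum_nonneg) simp
    thus ?thesis using rowsq[of undefined] by linarith
  qed
  have coh: "r * coherence S / N = Mx"
  proof -
    have "coherence S = N / r * Mx" unfolding coherence_def assms(2) Mx_def N_def r_def ..
    thus ?thesis using N0 r0 by simp
  qed
  have yM: "\<bar>y $ j\<bar> \<le> M" for j unfolding M_def by (rule Max_ge) auto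
  have "\<not> (\<forall>j. y $ j = 0)" using assms(6) by (simp add: vec_eq_iff)
  then obtain j0 where j0: "y $ j0 \<noteq> 0" by blast
  have M0: "M > 0" using yM[of j0] j0 by linarith
  have ny_sum: "ny = (\<Sum>j\<in>UNIV. (y $ j)\<^sup>2)"
    unfolding ny_def power2_norm_eq_inner inner_vec_def by (simp add: power2_eq_square)
  have ny0: "ny > 0" unfolding ny_def using assms(6) by simp
  have Zn: "(norm (Z j))\<^sup>2 = (y $ j)\<^sup>2 * (\<Sum>k\<in>UNIV. (U $ j $ k)\<^sup>2)" for j
    unfolding Z_def power2_norm_eq_inner inner_vec_def
    by (simp add: power2_eq_square sum_distrib_left mult_ac)
  have ZnM: "(norm (Z j))\<^sup>2 \<le> M\<^sup>2 * Mx" for j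
  proof -
    have "\<bar>y $ j\<bar>\<^sup>2 \<le> M\<^sup>2" by (rule power_mono[OF yM]) simp
    then have "(y $ j)\<^sup>2 \<le> M\<^sup>2" by simp
    thus ?thesis unfolding Zn using rowsq[of j] Mx0
      by (intro mult_mono) (auto intro: sum_nonneg)
  qed
  have Z0: "sum Z UNIV = 0"
  proof -
    have "(\<Sum>j\<in>UNIV. U $ j $ k * y $ j) = 0" for k
    proof -
      have "column k U \<in> S" unfolding assms(4)[symmetric] by (rule span_base) (auto simp: columns_def)
      then have "orthogonal (column k U) y" using assms(5) by (auto simp: orthogonal_comp_def)
      thus ?thesis by (simp add: orthogonal_def inner_vec_def column_def)
    qed
    thus ?thesis unfolding Z_def by (simp add: vec_eq_iff sum_component)
  qed
  have sp: "sampled_proj U y m \<Omega> = (\<Sum>i<m. Z (\<Omega> i))" for \<Omega>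
    unfolding sampled_proj_def Z_def by (simp add: vec_eq_iff sum_component)
  have samp: "sample_pmf m = pmf_of_set (PS m :: (nat \<Rightarrow> 'n) set)"
    unfolding sample_pmf_def PS_def ..
  have goal: "measure_pmf.prob (pmf_of_set (PS m :: (nat \<Rightarrow> 'n) set)) E \<ge> 1 - \<delta>"
  proof (cases "\<delta> < 1 \<and> m > 0 \<and> Mx > 0")
    case False
    show ?thesis
    proof (cases "\<delta> \<ge> 1")
      case True
      have "0 \<le> measure_pmf.prob (pmf_of_set (PS m :: (nat \<Rightarrow> 'n) set)) E" by (rule measure_nonneg)
      with True show ?thesis by linarith
    next
      case False': False
      have "m = 0 \<or> Mx = 0" using False False' Mx0 by auto
      then have "Z (w i) = 0" if "i < m" for w i
      proof
        assume "Mx = 0"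
        then have "(norm (Z (w i)))\<^sup>2 \<le> 0" using ZnM[of "w i"] by simp
        thus ?thesis by simp
      qed (use that in simp)
      then have s0: "(\<Sum>i<m. Z (w i)) = 0" for w by (intro sum.neutral) auto
      have nn: "0 \<le> (1 + \<beta>)\<^sup>2 * (real m / N) * Mx * ny"
        using Mx0 N0 ny0 by (intro mult_nonneg_nonneg) auto
      have "E = UNIV" unfolding E_def sp coh s0 using nn by simp
      thus ?thesis using assms(7) by simp
    qed
  next
    case True
    then have d1: "\<delta> < 1" and m0: "m > 0" and Mxp: "Mx > 0" by auto
    define L where "L = ln (1 / \<delta>)"
    have L0: "L > 0" unfolding L_def using d1 assms(7) by simp
    have vc: "vec_coherence y = N * M\<^sup>2 / ny"
      unfolding vec_coherence_def N_def M_def ny_def ..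
    have b2: "\<beta>\<^sup>2 = 2 * (N * M\<^sup>2 / ny) * L"
      unfolding \<beta>_def vc L_def[symmetric] using L0 N0 ny0 by simp
    have beta0: "\<beta> > 0" unfolding \<beta>_def vc L_def[symmetric] using L0 N0 ny0 M0 by simp
    define b where "b = sqrt Mx * M"
    define B where "B = real m / N * Mx * ny"
    define t where "t = \<beta> * sqrt B"
    have b0: "b > 0" unfolding b_def using Mxp M0 by simp
    have B0: "B > 0" unfolding B_def using m0 N0 Mxp ny0 by simp
    have t0: "t > 0" unfolding t_def using beta0 B0 by simp
    have Zb: "norm (Z j) \<le> b" for j
    proof -
      have "(norm (Z j))\<^sup>2 \<le> b\<^sup>2" unfolding b_def using ZnM[of j] Mx0
        by (simp add: power_mult_distrib mult.commute)
      from power2_le_imp_le[OF this] show ?thesis using b0 by simp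
    qed
    have BB: "B \<ge> real m * (\<Sum>j\<in>UNIV. (norm (Z j))\<^sup>2) / real CARD('n)"
    proof -
      have "(\<Sum>j\<in>UNIV. (norm (Z j))\<^sup>2) \<le> (\<Sum>j\<in>UNIV. (y $ j)\<^sup>2 * Mx)"
        unfolding Zn by (intro sum_mono mult_left_mono rowsq) auto
      also have "\<dots> = Mx * ny" unfolding ny_sum sum_distrib_left by (simp add: mult.commute)
      finally have "real m * (\<Sum>j\<in>UNIV. (norm (Z j))\<^sup>2) / N \<le> real m * (Mx * ny) / N"
        using N0 by (intro divide_right_mono mult_left_mono) auto
      thus ?thesis unfolding B_def N_def by simp
    qed
    have MA: "measure_pmf.prob (pmf_of_set (PS m)) {w. norm (\<Sum>i<m. Z (w i)) \<le> sqrt B + t}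
       \<ge> 1 - exp (- (2 * t\<^sup>2 / (real m * (2 * b)\<^sup>2)))"
      by (rule main_abs[OF Z0 Zb b0 m0 t0 BB])
    have "2 * t\<^sup>2 / (real m * (2 * b)\<^sup>2) = L"
    proof -
      have "2 * t\<^sup>2 / (real m * (2 * b)\<^sup>2) = 2 * \<beta>\<^sup>2 * B / (4 * real m * Mx * M\<^sup>2)"
        unfolding t_def b_def using B0 Mx0 by (simp add: power_mult_distrib)
      also have "\<dots> = L"
      proof -
        have "2 * \<beta>\<^sup>2 * B = L * (4 * real m * Mx * M\<^sup>2)"
          unfolding b2 B_def using N0 ny0 by (simp add: field_simps)
        moreover have "4 * real m * Mx * M\<^sup>2 \<noteq> 0" using m0 Mxp M0 by simp
        ultimately show ?thesis by simp
      qed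
      finally show ?thesis .
    qed
    then have "exp (- (2 * t\<^sup>2 / (real m * (2 * b)\<^sup>2))) = \<delta>"
      unfolding L_def using assms(7) by (simp add: ln_div exp_minus)
    note MA = MA[unfolded this]
    have sub: "{w. norm (\<Sum>i<m. Z (w i)) \<le> sqrt B + t} \<subseteq> E"
    proof
      fix w assume "w \<in> {w. norm (\<Sum>i<m. Z (w i)) \<le> sqrt B + t}"
      then have "norm (\<Sum>i<m. Z (w i)) \<le> (1 + \<beta>) * sqrt B" unfolding t_def by (simp add: distrib_right)
      then have "(norm (\<Sum>i<m. Z (w i)))\<^sup>2 \<le> ((1 + \<beta>) * sqrt B)\<^sup>2" by (intro power_mono) auto
      also have "\<dots> = (1 + \<beta>)\<^sup>2 * B" using B0 by (simp add: power_mult_distrib)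
      finally show "w \<in> E" unfolding E_def sp coh B_def by (simp add: mult.assoc)
    qed
    have "measure_pmf.prob (pmf_of_set (PS m)) {w. norm (\<Sum>i<m. Z (w i)) \<le> sqrt B + t}
        \<le> measure_pmf.prob (pmf_of_set (PS m)) E"
      by (rule measure_pmf.finite_measure_mono[OF sub]) simp
    with MA show ?thesis by linarith
  qed
  show ?thesis using goal unfolding samp E_def \<beta>_def N_def r_def ny_def .
qed

end
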